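(* Let $f,g$ be real analytic functions on $[-1,1]$, and for $\rho\in\mathbb{R}$ with $|\rho|$ sufficiently small let $x(t,\rho)$ denote the solution on $[-1,1]$ of the Abel equation $x'=f(t)x^3+g(t)x^2$ with $x(-1,\rho)=\rho$. Define $$H(t,\rho)=\int_{-1}^t\big(f(s)x(s,\rho)+g(s)\big)\,ds,\qquad G(t)=\int_{-1}^t g(s)\,ds,\qquad F(t)=\int_{-1}^t f(s)\,ds.$$ Then $$\frac{\partial^{j}}{\partial\rho^{j}}H(1,\rho)\Big|_{\rho=0}=j!\int_{-1}^1 f(t)\,G^{j-1}(t)\,dt\quad\text{for } j=1,2,$$ and $$\frac{\partial^{3}}{\partial\rho^{3}}H(1,\rho)\Big|_{\rho=0}=3!\int_{-1}^1 f(t)\,G^{2}(t)\,dt+3!\int_{-1}^1 f(t)\,F(t)\,dt.$$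
   Context: The solution $x(t,\rho)$ is analytic in $(t,\rho)$ and equivalently satisfies the integral equation $x(t,\rho)=\dfrac{\rho}{1-\rho H(t,\rho)}$ for $t\in[-1,1]$ and $|\rho|$ small. *)

theory Defs
  imports "HOL-Analysis.Analysis"
begin

definition real_analytic_on :: "(real \<Rightarrow> real) \<Rightarrow> real set \<Rightarrow> bool" where
  "real_analytic_on f S \<longleftrightarrow>
     (\<forall>x0\<in>S. \<exists>r>0. \<exists>a::nat \<Rightarrow> real. \<forall>y. \<bar>y - x0\<bar> < r \<longrightarrow> (\<lambda>n. a n * (y - x0) ^ n) sums f y)"

end

theory Submission
  imports Defs
begin


lemma analytic_cont:
  assumes "real_analytic_on f S"
  shows "continuous_on S f"
proof (rule continuous_at_imp_continuous_on, rule ballI)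
  fix x0 assume "x0 \<in> S"
  with assms obtain r a where r: "r > 0" and a: "\<And>y. \<bar>y - x0\<bar> < r \<Longrightarrow> (\<lambda>n. a n * (y - x0) ^ n) sums f y"
    unfolding real_analytic_on_def by blast
  have "summable (\<lambda>n. a n * (r/2) ^ n)"
    using a[of "x0 + r/2"] r by (auto simp: sums_iff)
  then have c: "isCont (\<lambda>h. \<Sum>n. a n * h ^ n) 0"
    by (rule isCont_powser) (use r in auto)
  have c2: "isCont (\<lambda>y. \<Sum>n. a n * (y - x0) ^ n) x0"
  proof -
    have d: "isCont (\<lambda>y. y - x0) x0" by (intro continuous_intros)
    have "isCont (\<lambda>h. \<Sum>n. a n * h ^ n) ((\<lambda>y. y - x0) x0)" using c by simp
    from isCont_o2[OF d this] show ?thesis by simp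
  qed
  moreover have ev: "\<forall>\<^sub>F y in nhds x0. (\<Sum>n. a n * (y - x0) ^ n) = f y"
  proof -
    have "\<forall>\<^sub>F y in nhds x0. y \<in> ball x0 r" using r by (intro eventually_nhds_in_open) auto
    then show ?thesis by eventually_elim (use a in \<open>auto simp: sums_iff dist_real_def abs_minus_commute\<close>)
  qed
  show "isCont f x0"
    using isCont_cong[OF ev] c2 by simp
qed

lemma lin_ode:
  fixes w a :: "real \<Rightarrow> real"
  assumes ac: "continuous_on {-1..1} a"
    and wd: "\<And>s. s \<in> {-1..1} \<Longrightarrow> (w has_real_derivative a s * w s) (at s within {-1..1})"
    and t: "t \<in> {-1..1}"
  shows "w t = w (-1) * exp (integral {-1..t} a)"
proof -
  define v where "v s = w s * exp (- integral {-1..s} a)" for s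
  have "(v has_real_derivative 0) (at s within {-1..1})" if s: "s \<in> {-1..1}" for s
  proof -
    have i: "((\<lambda>s. integral {-1..s} a) has_real_derivative a s) (at s within {-1..1})"
      by (rule integral_has_real_derivative[OF ac s])
    have "((\<lambda>s. w s * exp (- integral {-1..s} a)) has_real_derivative
       (a s * w s) * exp (- integral {-1..s} a) + w s * (exp (- integral {-1..s} a) * (- a s))) (at s within {-1..1})"
      using DERIV_mult[OF wd[OF s] DERIV_chain2[OF DERIV_exp DERIV_minus[OF i]]] by simp
    then show ?thesis unfolding v_def by (simp add: algebra_simps)
  qed
  then obtain c where c: "\<And>s. s \<in> {-1..1} \<Longrightarrow> v s = c"
    using has_field_derivative_zero_constant[of "{-1..1::real}" v] by auto
  have "v (-1) = w (-1)" by (simp add: v_def)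
  then have "v t = w (-1)" using c[OF t] c[of "-1"] by auto
  then show ?thesis unfolding v_def by (simp add: exp_minus field_simps)
qed


lemma J:
  fixes \<phi> :: "real \<Rightarrow> real \<Rightarrow> real"
  assumes c: "continuous_on (U \<times> {-1..1}) (\<lambda>(\<rho>,s). \<phi> \<rho> s)"
  shows "continuous_on (U \<times> {-1..1}) (\<lambda>(\<rho>,t). integral {-1..t} (\<phi> \<rho>))"
proof -
  have eq: "integral {-1..t} (\<phi> \<rho>) = integral (cbox 0 1) (\<lambda>u. (t+1) * \<phi> \<rho> (-1 + u*(t+1)))"
    if \<rho>: "\<rho> \<in> U" and t: "t \<in> {-1..1}" for \<rho> t
  proof -
    have c1: "continuous_on {-1..1} (\<phi> \<rho>)"
      by (rule continuous_on_compose2[OF c, of _ "\<lambda>s. (\<rho>, s)", simplified])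
         (use \<rho> in \<open>auto intro!: continuous_intros\<close>)
    have "((\<lambda>u. (t+1) *\<^sub>R \<phi> \<rho> (-1 + u*(t+1))) has_integral integral {(-1 + 0*(t+1))..(-1 + 1*(t+1))} (\<phi> \<rho>)) {0..1}"
    proof (rule has_integral_substitution[where c="-1" and d=1])
      show "(\<lambda>u. -1 + u*(t+1)) ` {0..1} \<subseteq> {-1..1}"
      proof
        fix y assume "y \<in> (\<lambda>u. -1 + u*(t+1)) ` {0..1::real}"
        then obtain u where u: "0 \<le> u" "u \<le> 1" "y = -1 + u*(t+1)" by auto
        have "0 \<le> u*(t+1)" using u t by auto
        moreover have "u*(t+1) \<le> 1*(t+1)" using u t by (intro mult_right_mono) auto
        ultimately show "y \<in> {-1..1}" using u t by auto
      qed
      show "\<And>u. u \<in> {0..1} \<Longrightarrow> ((\<lambda>u. -1 + u*(t+1)) has_real_derivative (t+1)) (at u within {0..1})"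
        by (auto intro!: derivative_eq_intros)
    qed (use t c1 in auto)
    then have "((\<lambda>u. (t+1) * \<phi> \<rho> (-1 + u*(t+1))) has_integral integral {-1..t} (\<phi> \<rho>)) (cbox 0 1)"
      by simp
    from integral_unique[OF this] show ?thesis by (rule sym)
  qed
  have "continuous_on (U \<times> {-1..1}) (\<lambda>p. integral (cbox 0 1) (\<lambda>u. (snd p+1) * \<phi> (fst p) (-1 + u*(snd p+1))))"
  proof (rule integral_continuous_on_param)
    have m: "(\<lambda>q. (fst (fst q), -1 + snd q * (snd (fst q) + 1))) ` ((U \<times> {-1..1::real}) \<times> cbox 0 (1::real)) \<subseteq> U \<times> {-1..1}"
    proof (rule image_subsetI)
      fix q :: "(real \<times> real) \<times> real" assume q: "q \<in> (U \<times> {-1..1}) \<times> cbox 0 1"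
      obtain a t u where qq: "q = ((a,t),u)" by (metis prod.collapse)
      have h: "a \<in> U" "-1 \<le> t" "t \<le> 1" "0 \<le> u" "u \<le> 1" using q qq by auto
      have "u*(t+1) \<le> 1*(t+1)" using h by (intro mult_right_mono) auto
      moreover have "0 \<le> u*(t+1)" using h by auto
      ultimately show "(fst (fst q), -1 + snd q * (snd (fst q) + 1)) \<in> U \<times> {-1..1}" using h qq by auto
    qed
    have i: "continuous_on ((U \<times> {-1..1::real}) \<times> cbox 0 (1::real)) (\<lambda>q. (fst (fst q), -1 + snd q * (snd (fst q) + 1)))"
      by (intro continuous_intros)
    have c2: "continuous_on ((U \<times> {-1..1::real}) \<times> cbox 0 (1::real)) (\<lambda>q. \<phi> (fst (fst q)) (-1 + snd q * (snd (fst q) + 1)))"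
      using continuous_on_compose2[OF c i m] by simp
    have c3: "continuous_on ((U \<times> {-1..1::real}) \<times> cbox 0 (1::real)) (\<lambda>q. snd (fst q) + 1)"
      by (intro continuous_on_add continuous_on_snd continuous_on_fst continuous_on_id continuous_on_const)
    show "continuous_on ((U \<times> {-1..1::real}) \<times> cbox 0 (1::real)) (\<lambda>(p, u). (snd p+1) * \<phi> (fst p) (-1 + u*(snd p+1)))"
      unfolding case_prod_beta by (rule continuous_on_mult[OF c3 c2])
  qed
  then show ?thesis
    by (rule continuous_on_eq) (auto simp: eq)
qed

lemma LB:
  fixes \<phi> \<psi> :: "real \<Rightarrow> real \<Rightarrow> real"
  assumes U: "open U" "convex U" "\<rho> \<in> U" and t: "t \<in> {-1..1}"
    and d: "\<And>\<sigma> s. \<sigma> \<in> U \<Longrightarrow> s \<in> {-1..1} \<Longrightarrow> ((\<lambda>\<sigma>. \<phi> \<sigma> s) has_real_derivative \<psi> \<sigma> s) (at \<sigma>)"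
    and c\<phi>: "continuous_on (U \<times> {-1..1}) (\<lambda>(\<sigma>,s). \<phi> \<sigma> s)"
    and c\<psi>: "continuous_on (U \<times> {-1..1}) (\<lambda>(\<sigma>,s). \<psi> \<sigma> s)"
  shows "((\<lambda>\<sigma>. integral {-1..t} (\<phi> \<sigma>)) has_real_derivative integral {-1..t} (\<psi> \<rho>)) (at \<rho>)"
proof -
  have sub: "U \<times> cbox (-1) t \<subseteq> U \<times> {-1..1}" using t by auto
  have "((\<lambda>\<sigma>. integral (cbox (-1) t) (\<phi> \<sigma>)) has_real_derivative integral (cbox (-1) t) (\<psi> \<rho>)) (at \<rho> within U)"
  proof (rule leibniz_rule_field_derivative[where U=U, OF _ _ _ U(3) U(2)])
    show "((\<lambda>\<sigma>. \<phi> \<sigma> s) has_real_derivative \<psi> \<sigma> s) (at \<sigma> within U)" if "\<sigma> \<in> U" "s \<in> cbox (-1) t" for \<sigma> s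
    proof -
      have "((\<lambda>\<sigma>. \<phi> \<sigma> s) has_real_derivative \<psi> \<sigma> s) (at \<sigma>)"
        using that t by (intro d) auto
      then show ?thesis by (rule has_field_derivative_at_within)
    qed
    show "\<phi> \<sigma> integrable_on cbox (-1) t" if "\<sigma> \<in> U" for \<sigma>
    proof -
      have p: "continuous_on (cbox (-1) t) (\<lambda>s. (\<sigma>, s))"
        by (intro continuous_on_Pair continuous_on_const continuous_on_id)
      have im: "(\<lambda>s. (\<sigma>, s)) ` cbox (-1) t \<subseteq> U \<times> {-1..1}" using that t by auto
      have "continuous_on (cbox (-1) t) (\<phi> \<sigma>)"
        using continuous_on_compose2[OF c\<phi> p im] by simp
      then show ?thesis by (rule integrable_continuous)
    qed
    show "continuous_on (U \<times> cbox (-1) t) (\<lambda>(\<sigma>, s). \<psi> \<sigma> s)"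
      by (rule continuous_on_subset[OF c\<psi> sub])
  qed
  then show ?thesis by (simp add: at_within_open[OF U(3) U(1)])
qed

lemma int_bound:
  fixes h :: "real \<Rightarrow> real"
  assumes "continuous_on {-1..1} h" "t \<in> {-1..1}" "\<And>s. s \<in> {-1..t} \<Longrightarrow> \<bar>h s\<bar> \<le> K"
  shows "\<bar>integral {-1..t} h\<bar> \<le> 2 * K"
proof -
  have K: "0 \<le> K" using assms(3)[of "-1"] assms(2) by auto
  have "norm (integral {-1..t} h) \<le> K * (t - -1)"
    using assms by (intro integral_bound) (auto intro: continuous_on_subset)
  also have "\<dots> \<le> K * 2" using assms(2) K by (intro mult_left_mono) auto
  finally show ?thesis by simp
qed


lemma small_exp: "\<bar>z::real\<bar> \<le> 1/2 \<Longrightarrow> exp z \<le> 1 + 2 * \<bar>z\<bar>"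
  using exp_bound_lemma[of z] by simp

lemma cont_bound:
  fixes h :: "real \<Rightarrow> real"
  assumes "continuous_on {-1..1} h"
  shows "\<exists>B. \<forall>s\<in>{-1..1}. \<bar>h s\<bar> \<le> B"
proof -
  have "bounded (h ` {-1..1})"
    by (rule compact_imp_bounded[OF compact_continuous_image[OF assms compact_Icc]])
  then show ?thesis by (auto simp: bounded_iff)
qed

locale abel =
  fixes f g :: "real \<Rightarrow> real" and x :: "real \<Rightarrow> real \<Rightarrow> real" and \<delta> :: real
  assumes fc: "continuous_on {-1..1} f" and gc: "continuous_on {-1..1} g"
    and \<delta>_pos: "\<delta> > 0"
    and ode: "\<And>\<rho> t. \<bar>\<rho>\<bar> < \<delta> \<Longrightarrow> t \<in> {-1..1} \<Longrightarrow>
        ((\<lambda>s. x s \<rho>) has_real_derivative (f t * (x t \<rho>) ^ 3 + g t * (x t \<rho>) ^ 2))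
          (at t within {-1..1})"
    and init: "\<And>\<rho>. \<bar>\<rho>\<bar> < \<delta> \<Longrightarrow> x (-1) \<rho> = \<rho>"
begin

lemma xc: "\<bar>\<rho>\<bar> < \<delta> \<Longrightarrow> continuous_on {-1..1} (\<lambda>s. x s \<rho>)"
  unfolding continuous_on_eq_continuous_within using ode DERIV_continuous by blast

definition "Bf = (SOME B. \<forall>s\<in>{-1..1}. \<bar>f s\<bar> \<le> B)"
definition "Bg = (SOME B. \<forall>s\<in>{-1..1}. \<bar>g s\<bar> \<le> B)"
definition "B = \<bar>Bf\<bar> + \<bar>Bg\<bar> + 1"
definition "\<delta>1 = min \<delta> (1 / (64 * B))"

lemma B1: "B \<ge> 1" by (simp add: B_def)

lemma fB: "s \<in> {-1..1} \<Longrightarrow> \<bar>f s\<bar> \<le> B"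
proof -
  assume s: "s \<in> {-1..1}"
  have "\<forall>s\<in>{-1..1}. \<bar>f s\<bar> \<le> Bf" unfolding Bf_def by (rule someI_ex[OF cont_bound[OF fc]])
  then show ?thesis using s by (force simp: B_def)
qed

lemma gB: "s \<in> {-1..1} \<Longrightarrow> \<bar>g s\<bar> \<le> B"
proof -
  assume s: "s \<in> {-1..1}"
  have "\<forall>s\<in>{-1..1}. \<bar>g s\<bar> \<le> Bg" unfolding Bg_def by (rule someI_ex[OF cont_bound[OF gc]])
  then show ?thesis using s by (force simp: B_def)
qed

lemma \<delta>1_pos: "\<delta>1 > 0" using \<delta>_pos B1 by (simp add: \<delta>1_def)
lemma \<delta>1_le: "\<delta>1 \<le> \<delta>" by (simp add: \<delta>1_def)
lemma \<delta>1_B: "64 * B * \<delta>1 \<le> 1"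
proof -
  have "\<delta>1 \<le> 1 / (64 * B)" by (simp add: \<delta>1_def)
  then show ?thesis using B1 by (simp add: field_simps)
qed
lemma \<delta>1_small: "\<delta>1 \<le> 1/64"
proof -
  have "1 / (64 * B) \<le> 1/64" using B1 by (simp add: field_simps)
  then show ?thesis unfolding \<delta>1_def by linarith
qed

lemma xrep:
  assumes \<rho>: "\<bar>\<rho>\<bar> < \<delta>" and t: "t \<in> {-1..1}"
  shows "x t \<rho> = \<rho> * exp (integral {-1..t} (\<lambda>s. f s * (x s \<rho>)^2 + g s * x s \<rho>))"
proof -
  have "x t \<rho> = x (-1) \<rho> * exp (integral {-1..t} (\<lambda>s. f s * (x s \<rho>)^2 + g s * x s \<rho>))"
  proof (rule lin_ode[where w="\<lambda>s. x s \<rho>"])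
    show "continuous_on {-1..1} (\<lambda>s. f s * (x s \<rho>)^2 + g s * x s \<rho>)"
      using fc gc xc[OF \<rho>] by (intro continuous_intros)
    fix s :: real assume s: "s \<in> {-1..1}"
    have e: "f s * (x s \<rho>)^3 + g s * (x s \<rho>)^2 = (f s * (x s \<rho>)^2 + g s * x s \<rho>) * x s \<rho>"
      by (simp add: power2_eq_square power3_eq_cube algebra_simps)
    show "((\<lambda>s. x s \<rho>) has_real_derivative (f s * (x s \<rho>)^2 + g s * x s \<rho>) * x s \<rho>) (at s within {-1..1})"
      using ode[OF \<rho> s] by (simp only: e)
  qed (use t in auto)
  then show ?thesis using init[OF \<rho>] by simp
qed

lemma x0: "t \<in> {-1..1} \<Longrightarrow> x t 0 = 0"
  using xrep[of 0 t] \<delta>_pos by simp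

lemma quad_bound:
  assumes "\<bar>a\<bar> \<le> B" "\<bar>b\<bar> \<le> B" "\<bar>y\<bar> \<le> 1"
  shows "\<bar>a * y^2 + b * y\<bar> \<le> 2 * B * \<bar>y\<bar>"
proof -
  have "\<bar>a * y^2 + b * y\<bar> \<le> \<bar>a * y^2\<bar> + \<bar>b * y\<bar>"
    by (rule abs_triangle_ineq)
  also have "\<dots> = \<bar>a\<bar> * \<bar>y\<bar>^2 + \<bar>b\<bar> * \<bar>y\<bar>"
    by (simp add: abs_mult)
  also have "\<dots> \<le> B * \<bar>y\<bar> + B * \<bar>y\<bar>"
  proof (intro add_mono mult_mono)
    have "\<bar>y\<bar> * \<bar>y\<bar> \<le> 1 * \<bar>y\<bar>" using assms(3) by (intro mult_right_mono) auto
    then show "\<bar>y\<bar>^2 \<le> \<bar>y\<bar>" by (simp add: power2_eq_square)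
  qed (use assms in auto)
  finally show ?thesis by (simp add: algebra_simps)
qed

lemma est:
  assumes \<rho>: "\<bar>\<rho>\<bar> < \<delta>1" and t: "t \<in> {-1..1}" and b: "\<And>s. s \<in> {-1..t} \<Longrightarrow> \<bar>x s \<rho>\<bar> \<le> 2 * \<bar>\<rho>\<bar>"
  shows "\<bar>x t \<rho>\<bar> \<le> 3/2 * \<bar>\<rho>\<bar>"
proof -
  have \<rho>': "\<bar>\<rho>\<bar> < \<delta>" using \<rho> \<delta>1_le by auto
  let ?a = "\<lambda>s. f s * (x s \<rho>)^2 + g s * x s \<rho>"
  have ab: "\<bar>?a s\<bar> \<le> 1/8" if s: "s \<in> {-1..t}" for s
  proof -
    have s1: "s \<in> {-1..1}" using s t by auto
    have xs: "\<bar>x s \<rho>\<bar> \<le> 2 * \<delta>1" using b[OF s] \<rho> by auto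
    then have "\<bar>x s \<rho>\<bar> \<le> 1" using \<delta>1_small by auto
    then have "\<bar>?a s\<bar> \<le> 2 * B * \<bar>x s \<rho>\<bar>" by (intro quad_bound fB gB s1)
    also have "\<dots> \<le> 2 * B * (2 * \<delta>1)" using xs B1 by (intro mult_left_mono) auto
    also have "\<dots> \<le> 1/8" using \<delta>1_B by auto
    finally show ?thesis .
  qed
  have ib: "\<bar>integral {-1..t} ?a\<bar> \<le> 2 * (1/8)"
    by (rule int_bound[OF _ t ab]) (use fc gc xc[OF \<rho>'] in \<open>intro continuous_intros\<close>)
  have "exp (integral {-1..t} ?a) \<le> 1 + 2 * \<bar>integral {-1..t} ?a\<bar>"
    using ib by (intro small_exp) auto
  also have "\<dots> \<le> 3/2" using ib by auto
  finally have e: "exp (integral {-1..t} ?a) \<le> 3/2" .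
  have "\<bar>x t \<rho>\<bar> = \<bar>\<rho>\<bar> * exp (integral {-1..t} ?a)"
    using xrep[OF \<rho>' t] by (simp add: abs_mult)
  also have "\<dots> \<le> \<bar>\<rho>\<bar> * (3/2)" using e by (intro mult_left_mono) auto
  finally show ?thesis by simp
qed

lemma xb:
  assumes \<rho>: "\<bar>\<rho>\<bar> < \<delta>1" and t: "t \<in> {-1..1}"
  shows "\<bar>x t \<rho>\<bar> \<le> 2 * \<bar>\<rho>\<bar>"
proof (cases "\<rho> = 0")
  case True then show ?thesis using x0[OF t] by simp
next
  case False
  have \<rho>': "\<bar>\<rho>\<bar> < \<delta>" using \<rho> \<delta>1_le by auto
  have c: "continuous_on {-1..1} (\<lambda>s. \<bar>x s \<rho>\<bar>)" using xc[OF \<rho>'] by (intro continuous_intros)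
  have hit: "\<exists>u. -1 \<le> u \<and> u \<le> s \<and> \<bar>x u \<rho>\<bar> = 2 * \<bar>\<rho>\<bar>"
    if s: "s \<in> {-1..1}" "2 * \<bar>\<rho>\<bar> \<le> \<bar>x s \<rho>\<bar>" for s
  proof (rule IVT')
    show "\<bar>x (-1) \<rho>\<bar> \<le> 2 * \<bar>\<rho>\<bar>" using init[OF \<rho>'] by simp
    show "continuous_on {-1..s} (\<lambda>s. \<bar>x s \<rho>\<bar>)" using c by (rule continuous_on_subset) (use s in auto)
  qed (use s in auto)
  show ?thesis
  proof (rule ccontr)
    assume "\<not> ?thesis"
    then have "2 * \<bar>\<rho>\<bar> \<le> \<bar>x t \<rho>\<bar>" by simp
    from hit[OF t this] obtain u where u: "-1 \<le> u" "u \<le> t" "\<bar>x u \<rho>\<bar> = 2 * \<bar>\<rho>\<bar>" by blast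
    define S where "S = {-1..1} \<inter> (\<lambda>s. \<bar>x s \<rho>\<bar>) -` {2 * \<bar>\<rho>\<bar>}"
    have Sc: "closed S" unfolding S_def by (rule continuous_closed_preimage[OF c]) auto
    have "u \<in> S" using u t unfolding S_def by auto
    then have Sne: "S \<noteq> {}" by auto
    have Sb: "bdd_below S" unfolding S_def by (rule bdd_belowI[of _ "-1"]) auto
    define t1 where "t1 = Inf S"
    have t1S: "t1 \<in> S" unfolding t1_def by (rule closed_contains_Inf[OF Sne Sb Sc])
    then have t1: "t1 \<in> {-1..1}" "\<bar>x t1 \<rho>\<bar> = 2 * \<bar>\<rho>\<bar>" unfolding S_def by auto
    have "\<bar>x s \<rho>\<bar> \<le> 2 * \<bar>\<rho>\<bar>" if s: "s \<in> {-1..t1}" for s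
    proof (rule ccontr)
      assume "\<not> ?thesis"
      then have s2: "2 * \<bar>\<rho>\<bar> \<le> \<bar>x s \<rho>\<bar>" "\<bar>x s \<rho>\<bar> \<noteq> 2 * \<bar>\<rho>\<bar>" by auto
      have s1: "s \<in> {-1..1}" using s t1 by auto
      from hit[OF s1 s2(1)] obtain v where v: "-1 \<le> v" "v \<le> s" "\<bar>x v \<rho>\<bar> = 2 * \<bar>\<rho>\<bar>" by blast
      have "v \<in> S" using v s1 unfolding S_def by auto
      then have "t1 \<le> v" unfolding t1_def by (rule cInf_lower[OF _ Sb])
      then have "s = t1" using v s by auto
      then show False using s2 t1 by auto
    qed
    from est[OF \<rho> t1(1) this] have "\<bar>x t1 \<rho>\<bar> \<le> 3/2 * \<bar>\<rho>\<bar>" .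
    then show False using t1 False by auto
  qed
qed


definition "U = {-\<delta>1<..<\<delta>1}"

lemma U_iff: "\<rho> \<in> U \<longleftrightarrow> \<bar>\<rho>\<bar> < \<delta>1" by (auto simp: U_def)
lemma U_open: "open U" by (simp add: U_def)
lemma U_convex: "convex U" by (simp add: U_def)
lemma U_0: "0 \<in> U" using \<delta>1_pos by (simp add: U_def)
lemma U_\<delta>: "\<rho> \<in> U \<Longrightarrow> \<bar>\<rho>\<bar> < \<delta>" using \<delta>1_le by (auto simp: U_iff)

definition "A \<sigma> \<rho> s = f s * ((x s \<sigma>)^2 + x s \<sigma> * x s \<rho> + (x s \<rho>)^2) + g s * (x s \<sigma> + x s \<rho>)"

lemma diffrep:
  assumes \<sigma>: "\<bar>\<sigma>\<bar> < \<delta>" and \<rho>: "\<bar>\<rho>\<bar> < \<delta>" and t: "t \<in> {-1..1}"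
  shows "x t \<sigma> - x t \<rho> = (\<sigma> - \<rho>) * exp (integral {-1..t} (A \<sigma> \<rho>))"
proof -
  have "x t \<sigma> - x t \<rho> = (x (-1) \<sigma> - x (-1) \<rho>) * exp (integral {-1..t} (A \<sigma> \<rho>))"
  proof (rule lin_ode[where w="\<lambda>s. x s \<sigma> - x s \<rho>"])
    show "continuous_on {-1..1} (A \<sigma> \<rho>)"
      unfolding A_def using fc gc xc[OF \<sigma>] xc[OF \<rho>] by (intro continuous_intros)
    fix s :: real assume s: "s \<in> {-1..1}"
    have e: "f s * (x s \<sigma>)^3 + g s * (x s \<sigma>)^2 - (f s * (x s \<rho>)^3 + g s * (x s \<rho>)^2) = A \<sigma> \<rho> s * (x s \<sigma> - x s \<rho>)"
      unfolding A_def by (simp add: power2_eq_square power3_eq_cube algebra_simps)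
    show "((\<lambda>s. x s \<sigma> - x s \<rho>) has_real_derivative A \<sigma> \<rho> s * (x s \<sigma> - x s \<rho>)) (at s within {-1..1})"
      using DERIV_diff[OF ode[OF \<sigma> s] ode[OF \<rho> s]] by (simp only: e)
  qed (use t in auto)
  then show ?thesis using init[OF \<sigma>] init[OF \<rho>] by simp
qed

lemma abs_mult_le1: "\<bar>p\<bar> \<le> 1 \<Longrightarrow> \<bar>p * q\<bar> \<le> \<bar>(q::real)\<bar>"
  by (simp add: abs_mult mult_left_le_one_le)

lemma A_bound:
  assumes \<sigma>: "\<sigma> \<in> U" and \<rho>: "\<rho> \<in> U" and s: "s \<in> {-1..1}"
  shows "\<bar>A \<sigma> \<rho> s\<bar> \<le> 1/4"
proof -
  let ?p = "x s \<sigma>" and ?q = "x s \<rho>"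
  have p: "\<bar>?p\<bar> \<le> 2 * \<delta>1" using xb[of \<sigma> s] \<sigma> s by (auto simp: U_iff)
  have q: "\<bar>?q\<bar> \<le> 2 * \<delta>1" using xb[of \<rho> s] \<rho> s by (auto simp: U_iff)
  have p1: "\<bar>?p\<bar> \<le> 1" and q1: "\<bar>?q\<bar> \<le> 1" using p q \<delta>1_small by auto
  have "\<bar>?p^2 + ?p * ?q + ?q^2\<bar> \<le> \<bar>?p * ?p\<bar> + \<bar>?p * ?q\<bar> + \<bar>?q * ?q\<bar>"
    by (simp add: power2_eq_square abs_triangle_ineq order_trans[OF abs_triangle_ineq])
  also have "\<dots> \<le> \<bar>?p\<bar> + \<bar>?q\<bar> + \<bar>?q\<bar>"
    using abs_mult_le1[OF p1, of ?p] abs_mult_le1[OF p1, of ?q] abs_mult_le1[OF q1, of ?q] by linarith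
  also have "\<dots> \<le> 6 * \<delta>1" using p q by auto
  finally have h1: "\<bar>?p^2 + ?p * ?q + ?q^2\<bar> \<le> 6 * \<delta>1" .
  have h2: "\<bar>?p + ?q\<bar> \<le> 4 * \<delta>1" using p q by auto
  have "\<bar>A \<sigma> \<rho> s\<bar> \<le> \<bar>f s\<bar> * \<bar>?p^2 + ?p * ?q + ?q^2\<bar> + \<bar>g s\<bar> * \<bar>?p + ?q\<bar>"
    unfolding A_def by (metis abs_mult abs_triangle_ineq)
  also have "\<dots> \<le> B * (6 * \<delta>1) + B * (4 * \<delta>1)"
    using fB[OF s] gB[OF s] h1 h2 by (intro add_mono mult_mono) auto
  also have "\<dots> = 10 * B * \<delta>1" by (simp add: algebra_simps)
  also have "\<dots> \<le> 1/4" using \<delta>1_B B1 \<delta>1_pos by linarith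
  finally show ?thesis .
qed

lemma lip:
  assumes \<sigma>: "\<sigma> \<in> U" and \<rho>: "\<rho> \<in> U" and t: "t \<in> {-1..1}"
  shows "\<bar>x t \<sigma> - x t \<rho>\<bar> \<le> 2 * \<bar>\<sigma> - \<rho>\<bar>"
proof -
  have ib: "\<bar>integral {-1..t} (A \<sigma> \<rho>)\<bar> \<le> 2 * (1/4)"
  proof (rule int_bound[OF _ t])
    show "continuous_on {-1..1} (A \<sigma> \<rho>)"
      unfolding A_def using fc gc xc[OF U_\<delta>[OF \<sigma>]] xc[OF U_\<delta>[OF \<rho>]] by (intro continuous_intros)
    show "\<bar>A \<sigma> \<rho> s\<bar> \<le> 1/4" if "s \<in> {-1..t}" for s using A_bound[OF \<sigma> \<rho>] that t by auto
  qed
  have e: "exp (integral {-1..t} (A \<sigma> \<rho>)) \<le> 2"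
    using small_exp[of "integral {-1..t} (A \<sigma> \<rho>)"] ib by auto
  have "\<bar>x t \<sigma> - x t \<rho>\<bar> = \<bar>\<sigma> - \<rho>\<bar> * exp (integral {-1..t} (A \<sigma> \<rho>))"
    using diffrep[OF U_\<delta>[OF \<sigma>] U_\<delta>[OF \<rho>] t] by (simp add: abs_mult)
  also have "\<dots> \<le> \<bar>\<sigma> - \<rho>\<bar> * 2" using e by (intro mult_left_mono) auto
  finally show ?thesis by simp
qed

lemma XC: "continuous_on (U \<times> {-1..1}) (\<lambda>p. x (snd p) (fst p))"
  unfolding continuous_on_iff
proof (intro ballI allI impI)
  fix p :: "real \<times> real" and e :: real assume p: "p \<in> U \<times> {-1..1}" and e: "e > 0"
  obtain \<rho> t where pp: "p = (\<rho>, t)" by (metis prod.collapse)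
  have \<rho>: "\<rho> \<in> U" and t: "t \<in> {-1..1}" using p pp by auto
  from xc[OF U_\<delta>[OF \<rho>]] t e obtain d1 where d1: "d1 > 0"
    and d1': "\<And>t'. t' \<in> {-1..1} \<Longrightarrow> dist t' t < d1 \<Longrightarrow> dist (x t' \<rho>) (x t \<rho>) < e/2"
    unfolding continuous_on_iff by (metis half_gt_zero)
  show "\<exists>d>0. \<forall>p'\<in>U \<times> {-1..1}. dist p' p < d \<longrightarrow> dist (x (snd p') (fst p')) (x (snd p) (fst p)) < e"
  proof (intro exI[of _ "min d1 (e/4)"] conjI ballI impI)
    show "min d1 (e/4) > 0" using d1 e by auto
    fix p' :: "real \<times> real" assume p': "p' \<in> U \<times> {-1..1}" and dp: "dist p' p < min d1 (e/4)"
    obtain \<sigma> t' where pp': "p' = (\<sigma>, t')" by (metis prod.collapse)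
    have \<sigma>: "\<sigma> \<in> U" and t': "t' \<in> {-1..1}" using p' pp' by auto
    have "dist \<sigma> \<rho> < e/4" using dist_fst_le[of p' p] dp pp pp' by auto
    then have a: "\<bar>x t' \<sigma> - x t' \<rho>\<bar> < e/2" using lip[OF \<sigma> \<rho> t'] by (auto simp: dist_real_def)
    have "dist t' t < d1" using dist_snd_le[of p' p] dp pp pp' by auto
    then have b: "\<bar>x t' \<rho> - x t \<rho>\<bar> < e/2" using d1'[OF t'] by (auto simp: dist_real_def)
    have "\<bar>x t' \<sigma> - x t \<rho>\<bar> < e" using a b by linarith
    then show "dist (x (snd p') (fst p')) (x (snd p) (fst p)) < e"
      using pp pp' by (simp add: dist_real_def)
  qed
qed

lemma cont_snd: "continuous_on {-1..1} h \<Longrightarrow> continuous_on (U \<times> {-1..1}) (\<lambda>p. h (snd p))"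
  by (rule continuous_on_compose2[where g=h]) (auto intro!: continuous_intros)

lemma XC_fix: "\<rho> \<in> U \<Longrightarrow> continuous_on (U \<times> {-1..1}) (\<lambda>p. x (snd p) \<rho>)"
  by (rule cont_snd[OF xc[OF U_\<delta>]])

lemma fC: "continuous_on (U \<times> {-1..1}) (\<lambda>p. f (snd p))" by (rule cont_snd[OF fc])
lemma gC: "continuous_on (U \<times> {-1..1}) (\<lambda>p. g (snd p))" by (rule cont_snd[OF gc])


definition "a1 \<rho> s = 3 * f s * (x s \<rho>)^2 + 2 * g s * x s \<rho>"
definition "P \<rho> t = exp (integral {-1..t} (a1 \<rho>))"
definition "b1 \<rho> s = (6 * f s * x s \<rho> + 2 * g s) * P \<rho> s"
definition "I2 \<rho> t = integral {-1..t} (b1 \<rho>)"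
definition "Q \<rho> t = P \<rho> t * I2 \<rho> t"
definition "c1 \<rho> s = 6 * f s * P \<rho> s * P \<rho> s + (6 * f s * x s \<rho> + 2 * g s) * Q \<rho> s"
definition "I3 \<rho> t = integral {-1..t} (c1 \<rho>)"
definition "R \<rho> t = Q \<rho> t * I2 \<rho> t + P \<rho> t * I3 \<rho> t"

lemma JJ:
  fixes \<phi> :: "real \<Rightarrow> real \<Rightarrow> real"
  assumes "continuous_on (U \<times> {-1..1}) (\<lambda>p. \<phi> (fst p) (snd p))"
  shows "continuous_on (U \<times> {-1..1}) (\<lambda>p. integral {-1..snd p} (\<phi> (fst p)))"
  using J[of U \<phi>] assms unfolding case_prod_beta by blast

lemma a1C: "continuous_on (U \<times> {-1..1}) (\<lambda>p. a1 (fst p) (snd p))"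
  unfolding a1_def by (intro fC gC XC continuous_intros)

lemma PC: "continuous_on (U \<times> {-1..1}) (\<lambda>p. P (fst p) (snd p))"
  unfolding P_def by (intro continuous_on_exp JJ a1C)

lemma b1C: "continuous_on (U \<times> {-1..1}) (\<lambda>p. b1 (fst p) (snd p))"
  unfolding b1_def by (intro fC gC XC PC continuous_intros)

lemma I2C: "continuous_on (U \<times> {-1..1}) (\<lambda>p. I2 (fst p) (snd p))"
  unfolding I2_def by (intro JJ b1C)

lemma QC: "continuous_on (U \<times> {-1..1}) (\<lambda>p. Q (fst p) (snd p))"
  unfolding Q_def by (intro PC I2C continuous_intros)

lemma c1C: "continuous_on (U \<times> {-1..1}) (\<lambda>p. c1 (fst p) (snd p))"
  unfolding c1_def by (intro fC gC XC PC QC continuous_intros)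

lemma I3C: "continuous_on (U \<times> {-1..1}) (\<lambda>p. I3 (fst p) (snd p))"
  unfolding I3_def by (intro JJ c1C)

lemma RC: "continuous_on (U \<times> {-1..1}) (\<lambda>p. R (fst p) (snd p))"
  unfolding R_def by (intro PC QC I2C I3C continuous_intros)

lemma dX:
  assumes \<rho>: "\<rho> \<in> U" and t: "t \<in> {-1..1}"
  shows "((\<lambda>\<sigma>. x t \<sigma>) has_real_derivative P \<rho> t) (at \<rho>)"
proof -
  define E where "E \<sigma> = exp (integral (cbox (-1) t) (\<lambda>s. A \<sigma> \<rho> s))" for \<sigma>
  have sub: "U \<times> cbox (-1) t \<subseteq> U \<times> {-1..1}" using t by auto
  have AC: "continuous_on (U \<times> {-1..1}) (\<lambda>p. A (fst p) \<rho> (snd p))"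
    unfolding A_def by (intro fC gC XC XC_fix[OF \<rho>] continuous_intros)
  have "continuous_on U (\<lambda>\<sigma>. integral (cbox (-1) t) (\<lambda>s. A \<sigma> \<rho> s))"
    by (rule integral_continuous_on_param) (use continuous_on_subset[OF AC sub] in \<open>simp add: case_prod_beta\<close>)
  then have "continuous_on U E" unfolding E_def by (intro continuous_on_exp)
  then have "isCont E \<rho>" using \<rho> U_open continuous_on_eq_continuous_at by blast
  then have lim: "(E \<longlongrightarrow> E \<rho>) (at \<rho>)" by (rule isContD)
  have Er: "E \<rho> = P \<rho> t"
  proof -
    have "A \<rho> \<rho> = a1 \<rho>" by (rule ext) (simp add: A_def a1_def power2_eq_square algebra_simps)
    then show ?thesis by (simp add: E_def P_def)
  qed
  have ev: "\<forall>\<^sub>F \<sigma> in at \<rho>. E \<sigma> = (x t \<sigma> - x t \<rho>) / (\<sigma> - \<rho>)"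
    using eventually_at_in_open[OF U_open \<rho>]
  proof eventually_elim
    case (elim \<sigma>)
    then have "\<sigma> \<in> U" "\<sigma> \<noteq> \<rho>" by auto
    then show ?case using diffrep[OF U_\<delta> U_\<delta>[OF \<rho>] t, of \<sigma>] by (simp add: E_def)
  qed
  show ?thesis unfolding has_field_derivative_iff
    using tendsto_cong[OF ev] lim Er by simp
qed

lemma dX': "\<rho> \<in> U \<Longrightarrow> s \<in> {-1..1} \<Longrightarrow> ((\<lambda>\<sigma>. x s \<sigma>) has_real_derivative P \<rho> s) (at \<rho>)"
  by (rule dX)


lemma cp: "continuous_on (U \<times> {-1..1}) (\<lambda>p. \<phi> (fst p) (snd p)) \<Longrightarrow> continuous_on (U \<times> {-1..1}) (\<lambda>(a, b). \<phi> a b)"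
  by (simp add: case_prod_beta)

lemma da1:
  assumes \<rho>: "\<rho> \<in> U" and s: "s \<in> {-1..1}"
  shows "((\<lambda>\<sigma>. a1 \<sigma> s) has_real_derivative b1 \<rho> s) (at \<rho>)"
proof -
  note d = dX[OF \<rho> s]
  from DERIV_add[OF DERIV_cmult[OF DERIV_mult[OF d d], of "3 * f s"] DERIV_cmult[OF d, of "2 * g s"]]
  show ?thesis unfolding a1_def b1_def by (simp add: power2_eq_square algebra_simps)
qed

lemma dI1:
  assumes \<rho>: "\<rho> \<in> U" and t: "t \<in> {-1..1}"
  shows "((\<lambda>\<sigma>. integral {-1..t} (a1 \<sigma>)) has_real_derivative I2 \<rho> t) (at \<rho>)"
  unfolding I2_def by (rule LB[OF U_open U_convex \<rho> t da1 cp[OF a1C] cp[OF b1C]])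

lemma dP:
  assumes \<rho>: "\<rho> \<in> U" and t: "t \<in> {-1..1}"
  shows "((\<lambda>\<sigma>. P \<sigma> t) has_real_derivative Q \<rho> t) (at \<rho>)"
  unfolding P_def Q_def using DERIV_chain2[OF DERIV_exp dI1[OF \<rho> t]] by simp

lemma db1:
  assumes \<rho>: "\<rho> \<in> U" and s: "s \<in> {-1..1}"
  shows "((\<lambda>\<sigma>. b1 \<sigma> s) has_real_derivative c1 \<rho> s) (at \<rho>)"
proof -
  from DERIV_mult[OF DERIV_add[OF DERIV_cmult[OF dX[OF \<rho> s], of "6 * f s"] DERIV_const[of "2 * g s"]] dP[OF \<rho> s]]
  show ?thesis unfolding b1_def c1_def by (simp add: algebra_simps)
qed

lemma dI2:
  assumes \<rho>: "\<rho> \<in> U" and t: "t \<in> {-1..1}"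
  shows "((\<lambda>\<sigma>. I2 \<sigma> t) has_real_derivative I3 \<rho> t) (at \<rho>)"
  unfolding I2_def I3_def by (rule LB[OF U_open U_convex \<rho> t db1 cp[OF b1C] cp[OF c1C]])

lemma dQ:
  assumes \<rho>: "\<rho> \<in> U" and t: "t \<in> {-1..1}"
  shows "((\<lambda>\<sigma>. Q \<sigma> t) has_real_derivative R \<rho> t) (at \<rho>)"
proof -
  have e: "(\<lambda>\<sigma>. Q \<sigma> t) = (\<lambda>\<sigma>. P \<sigma> t * I2 \<sigma> t)" by (simp add: Q_def)
  have r: "R \<rho> t = Q \<rho> t * I2 \<rho> t + I3 \<rho> t * P \<rho> t" by (simp add: R_def)
  show ?thesis using DERIV_mult[OF dP[OF \<rho> t] dI2[OF \<rho> t]] by (simp only: e r)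
qed

definition "h \<rho> = integral {-1..1} (\<lambda>s. f s * x s \<rho> + g s)"
definition "h1 \<rho> = integral {-1..1} (\<lambda>s. f s * P \<rho> s)"
definition "h2 \<rho> = integral {-1..1} (\<lambda>s. f s * Q \<rho> s)"
definition "h3 \<rho> = integral {-1..1} (\<lambda>s. f s * R \<rho> s)"

lemma dh: "\<rho> \<in> U \<Longrightarrow> (h has_real_derivative h1 \<rho>) (at \<rho>)"
  unfolding h_def h1_def
proof (rule LB[OF U_open U_convex _ _ _ cp cp, where \<phi>="\<lambda>\<sigma> s. f s * x s \<sigma> + g s" and \<psi>="\<lambda>\<sigma> s. f s * P \<sigma> s"])
  show "((\<lambda>\<sigma>. f s * x s \<sigma> + g s) has_real_derivative f s * P \<sigma> s) (at \<sigma>)" if "\<sigma> \<in> U" "s \<in> {-1..1}" for \<sigma> s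
    using DERIV_add[OF DERIV_cmult[OF dX[OF that]] DERIV_const[of "g s"]] by simp
  show "continuous_on (U \<times> {-1..1}) (\<lambda>p. f (snd p) * x (snd p) (fst p) + g (snd p))"
    by (intro fC gC XC continuous_intros)
  show "continuous_on (U \<times> {-1..1}) (\<lambda>p. f (snd p) * P (fst p) (snd p))"
    by (intro fC PC continuous_intros)
qed auto

lemma dh1: "\<rho> \<in> U \<Longrightarrow> (h1 has_real_derivative h2 \<rho>) (at \<rho>)"
  unfolding h1_def h2_def
proof (rule LB[OF U_open U_convex _ _ _ cp cp, where \<phi>="\<lambda>\<sigma> s. f s * P \<sigma> s" and \<psi>="\<lambda>\<sigma> s. f s * Q \<sigma> s"])
  show "((\<lambda>\<sigma>. f s * P \<sigma> s) has_real_derivative f s * Q \<sigma> s) (at \<sigma>)" if "\<sigma> \<in> U" "s \<in> {-1..1}" for \<sigma> s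
    using DERIV_cmult[OF dP[OF that]] by simp
  show "continuous_on (U \<times> {-1..1}) (\<lambda>p. f (snd p) * P (fst p) (snd p))"
    by (intro fC PC continuous_intros)
  show "continuous_on (U \<times> {-1..1}) (\<lambda>p. f (snd p) * Q (fst p) (snd p))"
    by (intro fC QC continuous_intros)
qed auto

lemma dh2: "\<rho> \<in> U \<Longrightarrow> (h2 has_real_derivative h3 \<rho>) (at \<rho>)"
  unfolding h2_def h3_def
proof (rule LB[OF U_open U_convex _ _ _ cp cp, where \<phi>="\<lambda>\<sigma> s. f s * Q \<sigma> s" and \<psi>="\<lambda>\<sigma> s. f s * R \<sigma> s"])
  show "((\<lambda>\<sigma>. f s * Q \<sigma> s) has_real_derivative f s * R \<sigma> s) (at \<sigma>)" if "\<sigma> \<in> U" "s \<in> {-1..1}" for \<sigma> s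
    using DERIV_cmult[OF dQ[OF that]] by simp
  show "continuous_on (U \<times> {-1..1}) (\<lambda>p. f (snd p) * Q (fst p) (snd p))"
    by (intro fC QC continuous_intros)
  show "continuous_on (U \<times> {-1..1}) (\<lambda>p. f (snd p) * R (fst p) (snd p))"
    by (intro fC RC continuous_intros)
qed auto


definition "Gi t = integral {-1..t} g"
definition "Fi t = integral {-1..t} f"

lemma Gd: "t \<in> {-1..1} \<Longrightarrow> (Gi has_real_derivative g t) (at t within {-1..1})"
  unfolding Gi_def by (rule integral_has_real_derivative[OF gc])

lemma GC: "continuous_on {-1..1} Gi"
  unfolding continuous_on_eq_continuous_within using Gd DERIV_continuous by blast

lemma FC: "continuous_on {-1..1} Fi"
  unfolding continuous_on_eq_continuous_within Fi_def
  using integral_has_real_derivative[OF fc] DERIV_continuous by blast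

lemma intgG:
  assumes t: "t \<in> {-1..1}"
  shows "integral {-1..t} (\<lambda>s. g s * Gi s) = (Gi t)^2 / 2"
proof -
  have "((\<lambda>s. g s * Gi s) has_integral ((Gi t)^2/2 - (Gi (-1))^2/2)) {-1..t}"
  proof (rule fundamental_theorem_of_calculus)
    show "-1 \<le> t" using t by auto
    fix u assume u: "u \<in> {-1..t}"
    then have u1: "u \<in> {-1..1}" using t by auto
    have "(Gi has_real_derivative g u) (at u within {-1..t})"
      by (rule DERIV_subset[OF Gd[OF u1]]) (use t in auto)
    from DERIV_cdivide[OF DERIV_mult[OF this this], of 2]
    have "((\<lambda>u. (Gi u)^2 / 2) has_real_derivative g u * Gi u) (at u within {-1..t})"
      by (simp add: power2_eq_square)
    then show "((\<lambda>u. (Gi u)^2 / 2) has_vector_derivative g u * Gi u) (at u within {-1..t})"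
      by (simp add: has_real_derivative_iff_has_vector_derivative)
  qed
  moreover have "Gi (-1) = 0" by (simp add: Gi_def)
  ultimately show ?thesis by (simp add: integral_unique)
qed

lemma int_on:
  fixes q :: "real \<Rightarrow> real"
  assumes "continuous_on {-1..1} q" "t \<in> {-1..1}"
  shows "q integrable_on {-1..t}"
  using assms by (intro integrable_continuous_interval) (auto elim: continuous_on_subset)

lemma P0: "t \<in> {-1..1} \<Longrightarrow> P 0 t = 1"
proof -
  assume t: "t \<in> {-1..1}"
  have "integral {-1..t} (a1 0) = integral {-1..t} (\<lambda>s. 0)"
    by (rule integral_cong) (use t x0 in \<open>auto simp: a1_def\<close>)
  then show ?thesis by (simp add: P_def)
qed

lemma I20: "t \<in> {-1..1} \<Longrightarrow> I2 0 t = 2 * Gi t"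
proof -
  assume t: "t \<in> {-1..1}"
  have "integral {-1..t} (b1 0) = integral {-1..t} (\<lambda>s. 2 * g s)"
    by (rule integral_cong) (use t x0 P0 in \<open>auto simp: b1_def\<close>)
  then show ?thesis by (simp add: I2_def Gi_def)
qed

lemma Q0: "t \<in> {-1..1} \<Longrightarrow> Q 0 t = 2 * Gi t"
  by (simp add: Q_def P0 I20)

lemma I30: "t \<in> {-1..1} \<Longrightarrow> I3 0 t = 6 * Fi t + 2 * (Gi t)^2"
proof -
  assume t: "t \<in> {-1..1}"
  have "integral {-1..t} (c1 0) = integral {-1..t} (\<lambda>s. 6 * f s + 4 * (g s * Gi s))"
    by (rule integral_cong) (use t x0 P0 Q0 in \<open>auto simp: c1_def\<close>)
  also have "\<dots> = integral {-1..t} (\<lambda>s. 6 * f s) + integral {-1..t} (\<lambda>s. 4 * (g s * Gi s))"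
    by (rule integral_add) (use t fc gc GC in \<open>auto intro!: int_on continuous_intros\<close>)
  also have "\<dots> = 6 * Fi t + 2 * (Gi t)^2"
    using intgG[OF t] by (simp add: Fi_def)
  finally show ?thesis by (simp add: I3_def)
qed

lemma R0: "t \<in> {-1..1} \<Longrightarrow> R 0 t = 6 * (Gi t)^2 + 6 * Fi t"
  by (simp add: R_def P0 I20 Q0 I30 power2_eq_square algebra_simps)

lemma h10: "h1 0 = integral {-1..1} f"
  unfolding h1_def by (rule integral_cong) (simp add: P0)

lemma h20: "h2 0 = 2 * integral {-1..1} (\<lambda>t. f t * Gi t)"
proof -
  have "h2 0 = integral {-1..1} (\<lambda>t. 2 * (f t * Gi t))"
    unfolding h2_def by (rule integral_cong) (simp add: Q0)
  then show ?thesis by simp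
qed

lemma h30: "h3 0 = 6 * integral {-1..1} (\<lambda>t. f t * (Gi t)^2) + 6 * integral {-1..1} (\<lambda>t. f t * Fi t)"
proof -
  have "h3 0 = integral {-1..1} (\<lambda>t. 6 * (f t * (Gi t)^2) + 6 * (f t * Fi t))"
    unfolding h3_def by (rule integral_cong) (simp add: R0 algebra_simps)
  also have "\<dots> = integral {-1..1} (\<lambda>t. 6 * (f t * (Gi t)^2)) + integral {-1..1} (\<lambda>t. 6 * (f t * Fi t))"
    by (rule integral_add) (use fc GC FC in \<open>auto intro!: int_on[of _ 1, simplified] continuous_intros\<close>)
  finally show ?thesis by simp
qed

end

theorem lemma2:
  fixes f g :: "real \<Rightarrow> real" and x :: "real \<Rightarrow> real \<Rightarrow> real" and \<delta> :: real
  assumes f_an: "real_analytic_on f {-1..1}"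
    and g_an: "real_analytic_on g {-1..1}"
    and \<delta>_pos: "\<delta> > 0"
    and ode: "\<And>\<rho> t. \<bar>\<rho>\<bar> < \<delta> \<Longrightarrow> t \<in> {-1..1} \<Longrightarrow>
        ((\<lambda>s. x s \<rho>) has_real_derivative (f t * (x t \<rho>) ^ 3 + g t * (x t \<rho>) ^ 2))
          (at t within {-1..1})"
    and init: "\<And>\<rho>. \<bar>\<rho>\<bar> < \<delta> \<Longrightarrow> x (-1) \<rho> = \<rho>"
  defines "H \<equiv> (\<lambda>t \<rho>. integral {-1..t} (\<lambda>s. f s * x s \<rho> + g s))"
    and "G \<equiv> (\<lambda>t. integral {-1..t} g)"
    and "F \<equiv> (\<lambda>t. integral {-1..t} f)"
  shows "(\<forall>k<3. \<forall>\<^sub>F \<rho> in nhds 0.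
            ((deriv ^^ k) (\<lambda>r. H 1 r) has_real_derivative (deriv ^^ Suc k) (\<lambda>r. H 1 r) \<rho>) (at \<rho>))
       \<and> (\<forall>j\<in>{1,2::nat}. (deriv ^^ j) (\<lambda>r. H 1 r) 0
              = fact j * integral {-1..1} (\<lambda>t. f t * G t ^ (j - 1)))
       \<and> (deriv ^^ 3) (\<lambda>r. H 1 r) 0
              = fact 3 * integral {-1..1} (\<lambda>t. f t * G t ^ 2)
                + fact 3 * integral {-1..1} (\<lambda>t. f t * F t)"
proof -
  interpret abel f g x \<delta>
    by (rule abel.intro[OF analytic_cont[OF f_an] analytic_cont[OF g_an] \<delta>_pos ode init])
  have hH: "(\<lambda>r. H 1 r) = h" by (simp add: H_def h_def fun_eq_iff)
  have GG: "G = Gi" by (simp add: G_def Gi_def fun_eq_iff)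
  have FF: "F = Fi" by (simp add: F_def Fi_def fun_eq_iff)
  have e1: "(deriv^^1) h = deriv h" by simp
  have e2: "(deriv^^2) h = deriv (deriv h)" by (simp add: numeral_2_eq_2)
  have e3: "(deriv^^3) h = deriv (deriv (deriv h))" by (simp add: numeral_3_eq_3)
  have d1: "deriv h \<rho> = h1 \<rho>" if "\<rho> \<in> U" for \<rho> using dh[OF that] by (rule DERIV_imp_deriv)
  have d2: "deriv (deriv h) \<rho> = h2 \<rho>" if \<rho>: "\<rho> \<in> U" for \<rho>
  proof -
    have ev: "\<forall>\<^sub>F y in nhds \<rho>. deriv h y = h1 y"
      using eventually_nhds_in_open[OF U_open \<rho>] by (rule eventually_mono) (rule d1)
    have "deriv (deriv h) \<rho> = deriv h1 \<rho>" by (rule deriv_cong_ev[OF ev refl])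
    also have "\<dots> = h2 \<rho>" using dh1[OF \<rho>] by (rule DERIV_imp_deriv)
    finally show ?thesis .
  qed
  have d3: "deriv (deriv (deriv h)) \<rho> = h3 \<rho>" if \<rho>: "\<rho> \<in> U" for \<rho>
  proof -
    have ev: "\<forall>\<^sub>F y in nhds \<rho>. deriv (deriv h) y = h2 y"
      using eventually_nhds_in_open[OF U_open \<rho>] by (rule eventually_mono) (rule d2)
    have "deriv (deriv (deriv h)) \<rho> = deriv h2 \<rho>" by (rule deriv_cong_ev[OF ev refl])
    also have "\<dots> = h3 \<rho>" using dh2[OF \<rho>] by (rule DERIV_imp_deriv)
    finally show ?thesis .
  qed
  have part1: "\<forall>k<3. \<forall>\<^sub>F \<rho> in nhds 0.
            ((deriv ^^ k) h has_real_derivative (deriv ^^ Suc k) h \<rho>) (at \<rho>)"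
  proof (intro allI impI)
    fix k :: nat assume "k < 3"
    then have k: "k = 0 \<or> k = 1 \<or> k = 2" by auto
    have "((deriv ^^ k) h has_real_derivative (deriv ^^ Suc k) h \<rho>) (at \<rho>)" if \<rho>: "\<rho> \<in> U" for \<rho>
    proof -
      have A0: "(h has_real_derivative deriv h \<rho>) (at \<rho>)" using dh[OF \<rho>] d1[OF \<rho>] by simp
      have A1: "(deriv h has_real_derivative deriv (deriv h) \<rho>) (at \<rho>)"
        using has_field_derivative_transform_within_open[OF dh1[OF \<rho>] U_open \<rho>, of "deriv h"] d1 d2[OF \<rho>] by simp
      have A2: "(deriv (deriv h) has_real_derivative deriv (deriv (deriv h)) \<rho>) (at \<rho>)"
        using has_field_derivative_transform_within_open[OF dh2[OF \<rho>] U_open \<rho>, of "deriv (deriv h)"] d2 d3[OF \<rho>] by simp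
      from k show ?thesis
      proof (elim disjE)
        assume "k = 0" then show ?thesis using A0 by simp
      next
        assume "k = 1" then show ?thesis using A1 by simp
      next
        assume "k = 2" then show ?thesis using A2 by (simp add: numeral_2_eq_2)
      qed
    qed
    then show "\<forall>\<^sub>F \<rho> in nhds 0. ((deriv ^^ k) h has_real_derivative (deriv ^^ Suc k) h \<rho>) (at \<rho>)"
      using eventually_nhds_in_open[OF U_open U_0] by (rule eventually_mono[rotated])
  qed
  have part2: "\<forall>j\<in>{1,2::nat}. (deriv ^^ j) h 0 = fact j * integral {-1..1} (\<lambda>t. f t * Gi t ^ (j - 1))"
  proof
    fix j :: nat assume "j \<in> {1,2}"
    then have "j = 1 \<or> j = 2" by auto
    then show "(deriv ^^ j) h 0 = fact j * integral {-1..1} (\<lambda>t. f t * Gi t ^ (j - 1))"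
    proof
      assume "j = 1" then show ?thesis using d1[OF U_0] h10 by simp
    next
      assume "j = 2" then show ?thesis using d2[OF U_0] h20 e2 by simp
    qed
  qed
  have part3: "(deriv ^^ 3) h 0 = fact 3 * integral {-1..1} (\<lambda>t. f t * Gi t ^ 2)
                + fact 3 * integral {-1..1} (\<lambda>t. f t * Fi t)"
    using d3[OF U_0] h30 e3 by (simp add: fact_numeral)
  show ?thesis unfolding hH GG FF using part1 part2 part3 by blast
qed

end
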